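(* For $\mathbb P=\mathrm{Cauchy}(l_1,s_1)$, $\mathbb Q=\mathrm{Cauchy}(l_2,s_2)$ ($l_i\in\mathbb R$, $s_i>0$), one has $\rho_\alpha(\mathbb P,\mathbb Q)=\rho_{1-\alpha}(\mathbb P,\mathbb Q)$ for all $\alpha\in[0,1]$. Consequently, if $\mathbb P\ne\mathbb Q$, the maximiser of $\alpha\mapsto D_{B,\alpha}(\mathbb P,\mathbb Q)$ over $[0,1]$ is unique and equals $\alpha^*=1/2$, so $D_C(\mathbb P,\mathbb Q)=D_{B,1/2}(\mathbb P,\mathbb Q)$; if $\mathbb P=\mathbb Q$, $D_{B,\alpha}\equiv0$ and every $\alpha\in[0,1]$ is a maximiser.
   Context: Cauchy density $p_{l,s}(x)=\frac{s}{\pi(s^2+(x-l)^2)}$ on $\mathbb R$ w.r.t. Lebesgue measure. Unweighted quantities: $\rho_\alpha(\mathbb P,\mathbb Q)=\int_{\mathbb R}p_{l_1,s_1}(x)^\alpha p_{l_2,s_2}(x)^{1-\alpha}\,\mathrm dx$, $D_{B,\alpha}=-\ln\rho_\alpha$, $D_C(\mathbb P,\mathbb Q)=\max_{\alpha\in[0,1]}D_{B,\alpha}(\mathbb P,\mathbb Q)$. *)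

theory Defs
  imports "HOL-Analysis.Analysis"
begin

definition cauchy_pdf :: "real \<Rightarrow> real \<Rightarrow> real \<Rightarrow> real" where
  "cauchy_pdf l s x = s / (pi * (s\<^sup>2 + (x - l)\<^sup>2))"

definition rho :: "real \<Rightarrow> real \<Rightarrow> real \<Rightarrow> real \<Rightarrow> real \<Rightarrow> real" where
  "rho \<alpha> l1 s1 l2 s2 =
     (\<integral>x. (cauchy_pdf l1 s1 x) powr \<alpha> * (cauchy_pdf l2 s2 x) powr (1 - \<alpha>) \<partial>lborel)"

definition D_B :: "real \<Rightarrow> real \<Rightarrow> real \<Rightarrow> real \<Rightarrow> real \<Rightarrow> real" where
  "D_B \<alpha> l1 s1 l2 s2 = - ln (rho \<alpha> l1 s1 l2 s2)"

definition D_C :: "real \<Rightarrow> real \<Rightarrow> real \<Rightarrow> real \<Rightarrow> real" where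
  "D_C l1 s1 l2 s2 = (SUP \<alpha>\<in>{0..1}. D_B \<alpha> l1 s1 l2 s2)"

end

theory Submission imports Defs "HOL-Probability.Probability" begin

lemma cauchy_pos: "s > 0 \<Longrightarrow> cauchy_pdf l s x > 0"
  unfolding cauchy_pdf_def by (auto intro!: divide_pos_pos mult_pos_pos add_pos_nonneg)

lemma cauchy_cont: "s > 0 \<Longrightarrow> continuous_on A (cauchy_pdf l s)"
  unfolding cauchy_pdf_def
  by (intro continuous_intros) (auto simp: add_pos_nonneg)

lemma cauchy_meas[measurable]: "cauchy_pdf l s \<in> borel_measurable borel"
  unfolding cauchy_pdf_def by measurable

lemma std_int: "integrable lborel (\<lambda>x::real. inverse (1 + x^2))"
    "(\<integral>x. inverse (1 + x^2) \<partial>lborel) = pi"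
  using integrable_inverse_1_plus_square LBINT_inverse_1_plus_square
  by (auto simp: interval_lebesgue_integral_def set_integrable_def set_lebesgue_integral_def)

lemma cauchy_affine: "s > 0 \<Longrightarrow> cauchy_pdf l s (l + s * y) = 1 / (pi * s) * inverse (1 + y^2)"
proof -
  assume s: "s > 0"
  have "s\<^sup>2 + (l + s * y - l)\<^sup>2 = s * (s * (1 + y^2))" by (simp add: algebra_simps power2_eq_square)
  then show ?thesis unfolding cauchy_pdf_def using s by (simp add: divide_simps)
qed

lemma cauchy_integrable: "s > 0 \<Longrightarrow> integrable lborel (cauchy_pdf l s)"
proof -
  assume s: "s > 0"
  have "integrable lborel (\<lambda>y. cauchy_pdf l s (l + s * y))"
    using std_int(1) by (simp add: cauchy_affine[OF s])
  then show ?thesis using lborel_integrable_real_affine_iff[of s "cauchy_pdf l s" l] s by simp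
qed

lemma cauchy_integral: "s > 0 \<Longrightarrow> (\<integral>x. cauchy_pdf l s x \<partial>lborel) = 1"
proof -
  assume s: "s > 0"
  have "(\<integral>x. cauchy_pdf l s x \<partial>lborel) = \<bar>s\<bar> *\<^sub>R (\<integral>y. cauchy_pdf l s (l + s * y) \<partial>lborel)"
    using lborel_integral_real_affine[of s "cauchy_pdf l s" l] s by simp
  also have "\<dots> = s * (1 / (pi * s) * pi)"
    using s std_int by (simp add: cauchy_affine[OF s])
  finally show ?thesis using s by simp
qed


lemma mobius_subst:
  fixes h :: "real \<Rightarrow> real"
  assumes R: "R > 0" and h: "h absolutely_integrable_on UNIV"
  shows "(\<lambda>y. R / (y - m)\<^sup>2 * h (m + R / (y - m))) absolutely_integrable_on UNIV \<and>
         integral UNIV (\<lambda>y. R / (y - m)\<^sup>2 * h (m + R / (y - m))) = integral UNIV h"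
proof -
  define S where "S = - {m}"
  define g where "g = (\<lambda>y. m + R / (y - m))"
  define g' where "g' = (\<lambda>y. - R / (y - m)\<^sup>2)"
  have S: "S \<in> sets lebesgue" unfolding S_def by simp
  have der: "(g has_field_derivative g' x) (at x within S)" if "x \<in> S" for x
    using that unfolding S_def g_def g'_def
    by (auto intro!: derivative_eq_intros simp: power2_eq_square field_simps)
  have inj: "inj_on g S"
    unfolding S_def g_def inj_on_def using R by (auto simp: field_simps)
  have img: "g ` S = S"
  proof
    show "g ` S \<subseteq> S" unfolding S_def g_def using R by auto
    show "S \<subseteq> g ` S"
    proof
      fix x assume x: "x \<in> S"
      hence "x = g (m + R / (x - m))" "m + R / (x - m) \<in> S"
        unfolding S_def g_def using R by (auto simp: field_simps)
      then show "x \<in> g ` S" by blast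
    qed
  qed
  have neg: "negligible {m}" by auto
  have hS: "h absolutely_integrable_on S"
    by (rule absolutely_integrable_spike_set[OF h]) (auto simp: S_def intro: negligible_subset[OF neg])
  have hSi: "integral S h = integral UNIV h"
    by (rule integral_spike_set) (auto simp: S_def intro: negligible_subset[OF neg])
  have abs': "\<And>y. \<bar>g' y\<bar> * h (g y) = R / (y - m)\<^sup>2 * h (m + R / (y - m))"
    unfolding g'_def g_def using R by simp
  have main: "(\<lambda>y. R / (y - m)\<^sup>2 * h (m + R / (y - m))) absolutely_integrable_on S \<and>
         integral S (\<lambda>y. R / (y - m)\<^sup>2 * h (m + R / (y - m))) = integral UNIV h"
    using has_absolute_integral_change_of_variables_1'[OF S der inj, of h "integral UNIV h"] hS hSi img
    by (simp add: abs')
  show ?thesis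
  proof
    show "(\<lambda>y. R / (y - m)\<^sup>2 * h (m + R / (y - m))) absolutely_integrable_on UNIV"
      by (rule absolutely_integrable_spike_set[OF main[THEN conjunct1]]) (auto simp: S_def intro: negligible_subset[OF neg])
    have "integral UNIV (\<lambda>y. R / (y - m)\<^sup>2 * h (m + R / (y - m))) = integral S (\<lambda>y. R / (y - m)\<^sup>2 * h (m + R / (y - m)))"
      by (rule integral_spike_set) (auto simp: S_def intro: negligible_subset[OF neg])
    then show "integral UNIV (\<lambda>y. R / (y - m)\<^sup>2 * h (m + R / (y - m))) = integral UNIV h"
      using main by simp
  qed
qed

lemma lborel_abs_int:
  fixes h :: "real \<Rightarrow> real"
  assumes "integrable lborel h"
  shows "h absolutely_integrable_on UNIV"
  using assms unfolding absolutely_integrable_on_def set_integrable_def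
  by (simp add: integrable_completion borel_measurable_integrable)

lemma cauchy_mobius:
  assumes s: "s > 0" and la: "la > 0" and w: "w \<noteq> 0" and R: "R = la * (u\<^sup>2 + s\<^sup>2)"
  shows "R / w\<^sup>2 * cauchy_pdf (m + u) s (m + R / w) = cauchy_pdf (m + la * u) (la * s) (m + w)"
proof -
  have d1: "s\<^sup>2 * w\<^sup>2 + (R - u * w)\<^sup>2 > 0" using s w by (simp add: add_pos_nonneg)
  have d2: "(la * s)\<^sup>2 + (w - la * u)\<^sup>2 > 0" using s la by (simp add: add_pos_nonneg)
  have e1: "R / w\<^sup>2 * cauchy_pdf (m + u) s (m + R / w) = s * R / (pi * (s\<^sup>2 * w\<^sup>2 + (R - u * w)\<^sup>2))"
    unfolding cauchy_pdf_def using w by (simp add: field_simps power2_eq_square)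
  have e2: "cauchy_pdf (m + la * u) (la * s) (m + w) = la * s / (pi * ((la * s)\<^sup>2 + (w - la * u)\<^sup>2))"
    unfolding cauchy_pdf_def by simp
  have key: "s * R * ((la * s)\<^sup>2 + (w - la * u)\<^sup>2) = la * s * (s\<^sup>2 * w\<^sup>2 + (R - u * w)\<^sup>2)"
    unfolding R by (simp add: algebra_simps power2_eq_square)
  show ?thesis unfolding e1 e2 using d1 d2 key
    by (simp add: divide_simps)
qed

lemma powr_scale:
  fixes a b c :: real
  assumes "a > 0" "b > 0" "c > 0"
  shows "c * (a powr t * b powr (1 - t)) = (c * a) powr t * (c * b) powr (1 - t)"
proof -
  have "c = c powr t * c powr (1 - t)" using assms by (simp add: powr_add[symmetric])
  then show ?thesis using assms by (simp add: powr_mult algebra_simps)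
qed

lemma rho_integrable:
  assumes s1: "s1 > 0" and s2: "s2 > 0" and a: "0 \<le> a" "a \<le> 1"
  shows "integrable lborel (\<lambda>x. cauchy_pdf l1 s1 x powr a * cauchy_pdf l2 s2 x powr (1 - a))"
proof (rule Bochner_Integration.integrable_bound)
  show "integrable lborel (\<lambda>x. a * cauchy_pdf l1 s1 x + (1 - a) * cauchy_pdf l2 s2 x)"
    using cauchy_integrable[OF s1] cauchy_integrable[OF s2] by auto
  show "(\<lambda>x. cauchy_pdf l1 s1 x powr a * cauchy_pdf l2 s2 x powr (1 - a)) \<in> borel_measurable lborel"
    by measurable
  show "AE x in lborel. norm (cauchy_pdf l1 s1 x powr a * cauchy_pdf l2 s2 x powr (1 - a))
          \<le> norm (a * cauchy_pdf l1 s1 x + (1 - a) * cauchy_pdf l2 s2 x)"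
  proof (rule AE_I2)
    fix x
    have p: "cauchy_pdf l1 s1 x > 0" "cauchy_pdf l2 s2 x > 0" using cauchy_pos s1 s2 by auto
    have "cauchy_pdf l1 s1 x powr a * cauchy_pdf l2 s2 x powr (1 - a) \<le> a * cauchy_pdf l1 s1 x + (1 - a) * cauchy_pdf l2 s2 x"
      by (rule Youngs_inequality_0) (use a p in auto)
    then show "norm (cauchy_pdf l1 s1 x powr a * cauchy_pdf l2 s2 x powr (1 - a))
          \<le> norm (a * cauchy_pdf l1 s1 x + (1 - a) * cauchy_pdf l2 s2 x)"
      using p a by simp
  qed
qed

lemma rho_sym:
  assumes s1: "s1 > 0" and s2: "s2 > 0" and a: "0 \<le> a" "a \<le> 1"
  shows "rho a l1 s1 l2 s2 = rho (1 - a) l1 s1 l2 s2"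
proof -
  define F where "F = (\<lambda>x. cauchy_pdf l1 s1 x powr a * cauchy_pdf l2 s2 x powr (1 - a))"
  define F' where "F' = (\<lambda>x. cauchy_pdf l1 s1 x powr (1 - a) * cauchy_pdf l2 s2 x powr (1 - (1 - a)))"
  have rF: "rho a l1 s1 l2 s2 = (\<integral>x. F x \<partial>lborel)" unfolding rho_def F_def ..
  have rF': "rho (1 - a) l1 s1 l2 s2 = (\<integral>x. F' x \<partial>lborel)" unfolding rho_def F'_def ..
  have iF: "integrable lborel F" unfolding F_def by (rule rho_integrable[OF s1 s2 a])
  have iF': "integrable lborel F'" unfolding F'_def by (rule rho_integrable[OF s1 s2]) (use a in auto)
  show ?thesis
  proof (cases "s1 = s2")
    case True
    have e: "F (l1 + l2 - y) = F' y" for y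
    proof -
      have "cauchy_pdf l1 s1 (l1 + l2 - y) = cauchy_pdf l2 s2 y"
        "cauchy_pdf l2 s2 (l1 + l2 - y) = cauchy_pdf l1 s1 y"
        unfolding cauchy_pdf_def True by (simp_all add: power2_commute)
      then show ?thesis unfolding F_def F'_def by simp
    qed
    have "(\<integral>x. F x \<partial>lborel) = \<bar>-1\<bar> *\<^sub>R (\<integral>y. F (l1 + l2 + (-1) * y) \<partial>lborel)"
      by (rule lborel_integral_real_affine) simp
    also have "\<dots> = (\<integral>y. F' y \<partial>lborel)" by (simp add: e)
    finally show ?thesis using rF rF' by simp
  next
    case False
    define la where "la = s2 / s1"
    have la: "la > 0" unfolding la_def using s1 s2 by simp
    have la1: "la \<noteq> 1" unfolding la_def using s1 False by simp
    define u where "u = (l1 - l2) / (1 - la)"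
    define m where "m = l1 - u"
    define R where "R = la * (u\<^sup>2 + s1\<^sup>2)"
    have R: "R > 0" unfolding R_def using la s1 by (simp add: add_nonneg_pos)
    have L1: "l1 = m + u" unfolding m_def by simp
    have "(1 - la) * u = l1 - l2" unfolding u_def using la1 by simp
    then have L2: "l2 = m + la * u" unfolding m_def by (simp add: algebra_simps)
    have S2: "s2 = la * s1" unfolding la_def using s1 by simp
    have G: "R / (y - m)\<^sup>2 * F (m + R / (y - m)) = F' y" if y: "y \<noteq> m" for y
    proof -
      define w where "w = y - m"
      have w: "w \<noteq> 0" "y = m + w" using y unfolding w_def by auto
      have q1: "R / w\<^sup>2 * cauchy_pdf l1 s1 (m + R / w) = cauchy_pdf l2 s2 y"
        unfolding L1 L2 S2 w(2) by (rule cauchy_mobius[OF s1 la w(1) R_def])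
      have q2: "R / w\<^sup>2 * cauchy_pdf l2 s2 (m + R / w) = cauchy_pdf l1 s1 y"
      proof -
        have "R / w\<^sup>2 * cauchy_pdf (m + la * u) (la * s1) (m + R / w) =
              cauchy_pdf (m + (1 / la) * (la * u)) ((1 / la) * (la * s1)) (m + w)"
          by (rule cauchy_mobius) (use s1 la w R_def in \<open>auto simp: power_mult_distrib field_simps power2_eq_square\<close>)
        then show ?thesis unfolding L1 L2 S2 w(2) using la by simp
      qed
      have pos: "cauchy_pdf l1 s1 (m + R / w) > 0" "cauchy_pdf l2 s2 (m + R / w) > 0"
        "R / w\<^sup>2 > 0" using cauchy_pos s1 s2 R w by auto
      have "R / w\<^sup>2 * F (m + R / w) = cauchy_pdf l2 s2 y powr a * cauchy_pdf l1 s1 y powr (1 - a)"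
        unfolding F_def powr_scale[OF pos] q1 q2 ..
      then show ?thesis unfolding F'_def w_def by simp
    qed
    have "(\<integral>x. F x \<partial>lborel) = integral UNIV F" using integral_lborel[OF iF] by simp
    also have "\<dots> = integral UNIV (\<lambda>y. R / (y - m)\<^sup>2 * F (m + R / (y - m)))"
      using mobius_subst[OF R lborel_abs_int[OF iF], of m] by simp
    also have "\<dots> = integral UNIV F'"
      by (rule integral_spike[of "{m}"]) (auto simp: G simp del: times_divide_eq_left)
    also have "\<dots> = (\<integral>x. F' x \<partial>lborel)" using integral_lborel[OF iF'] by simp
    finally show ?thesis using rF rF' by simp
  qed
qed

lemma integral_pos_ball:
  fixes Z :: "real \<Rightarrow> real"
  assumes iZ: "integrable lborel Z" and nn: "\<And>x. Z x \<ge> 0"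
    and e: "e > 0" and pos: "\<And>x. x \<in> ball x0 e \<Longrightarrow> Z x > 0"
  shows "(\<integral>x. Z x \<partial>lborel) > 0"
proof -
  have ge: "(\<integral>x. Z x \<partial>lborel) \<ge> 0" using nn by simp
  have "(\<integral>x. Z x \<partial>lborel) \<noteq> 0"
  proof
    assume "(\<integral>x. Z x \<partial>lborel) = 0"
    then have "AE x in lborel. Z x = 0"
      using integral_nonneg_eq_0_iff_AE[OF iZ] nn by simp
    then have "AE x in lborel. x \<notin> ball x0 e"
      by eventually_elim (use pos in force)
    then have "emeasure lborel (ball x0 e) = 0"
      by (subst (asm) AE_iff_measurable[of "ball x0 e"]) auto
    moreover have "emeasure lborel (ball x0 e) = ennreal (2 * e)"
      using e by (simp add: ball_eq_greaterThanLessThan)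
    ultimately show False using e by simp
  qed
  then show ?thesis using ge by simp
qed

lemma cauchy_differ:
  assumes s1: "s1 > 0" and s2: "s2 > 0" and ne: "(l1, s1) \<noteq> (l2, s2)"
  shows "\<exists>x0. cauchy_pdf l1 s1 x0 \<noteq> cauchy_pdf l2 s2 x0"
proof (rule ccontr)
  assume "\<not> ?thesis"
  then have e1: "cauchy_pdf l1 s1 l1 = cauchy_pdf l2 s2 l1" and e2: "cauchy_pdf l1 s1 l2 = cauchy_pdf l2 s2 l2"
    by auto
  have pp: "pi > 0" by simp
  have D1: "s2\<^sup>2 + (l1 - l2)\<^sup>2 > 0" "s1\<^sup>2 + (l2 - l1)\<^sup>2 > 0" using s1 s2 by (auto intro: add_pos_nonneg)
  have f1: "1 / (pi * s1) = s2 / (pi * (s2\<^sup>2 + (l1 - l2)\<^sup>2))"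
    using e1 s1 unfolding cauchy_pdf_def by (simp add: power2_eq_square)
  have f2: "s1 / (pi * (s1\<^sup>2 + (l2 - l1)\<^sup>2)) = 1 / (pi * s2)"
    using e2 s2 unfolding cauchy_pdf_def by (simp add: power2_eq_square)
  have a: "s2\<^sup>2 + (l1 - l2)\<^sup>2 = s1 * s2"
    using f1 D1 s1 s2 pp by (simp add: divide_simps)
  have b: "s1\<^sup>2 + (l2 - l1)\<^sup>2 = s1 * s2"
    using f2 D1 s1 s2 pp by (simp add: divide_simps)
  have "s1\<^sup>2 = s2\<^sup>2" using a b by (simp add: power2_commute)
  then have "s1 = s2" using s1 s2 by (simp add: power2_eq_iff)
  then have "(l1 - l2)\<^sup>2 = 0" using a by (simp add: power2_eq_square)
  then have "l1 = l2" by simp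
  then show False using ne \<open>s1 = s2\<close> by simp
qed

lemma amgm_pointwise:
  fixes p q a :: real
  assumes p: "p > 0" and q: "q > 0"
  shows "p powr (1/2) * q powr (1 - 1/2) \<le> (p powr a * q powr (1 - a) + p powr (1 - a) * q powr (1 - (1 - a))) / 2"
    and "a \<noteq> 1/2 \<Longrightarrow> p \<noteq> q \<Longrightarrow>
      p powr (1/2) * q powr (1 - 1/2) < (p powr a * q powr (1 - a) + p powr (1 - a) * q powr (1 - (1 - a))) / 2"
proof -
  define A where "A = p powr a * q powr (1 - a)"
  define B where "B = p powr (1 - a) * q powr (1 - (1 - a))"
  define H where "H = p powr (1/2) * q powr (1 - 1/2)"
  have A0: "A > 0" and B0: "B > 0" and H0: "H > 0" unfolding A_def B_def H_def using p q by auto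
  have AB: "A * B = p * q"
  proof -
    have "A * B = (p powr a * p powr (1 - a)) * (q powr (1 - a) * q powr (1 - (1 - a)))"
      unfolding A_def B_def by (simp add: algebra_simps)
    also have "\<dots> = p * q" using p q by (simp add: powr_add[symmetric])
    finally show ?thesis .
  qed
  have HH: "H * H = p * q"
  proof -
    have "H * H = (p powr (1/2) * p powr (1/2)) * (q powr (1/2) * q powr (1/2))"
      unfolding H_def by (simp add: algebra_simps)
    also have "\<dots> = p * q" using p q by (simp add: powr_add[symmetric])
    finally show ?thesis .
  qed
  have sq: "((A + B) / 2)\<^sup>2 - H\<^sup>2 = ((A - B) / 2)\<^sup>2"
    using AB HH by (simp add: power2_eq_square algebra_simps)
  show "H \<le> (A + B) / 2"
  proof (rule power2_le_imp_le)
    show "H\<^sup>2 \<le> ((A + B) / 2)\<^sup>2" using sq by (smt (verit) zero_le_power2)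
    show "0 \<le> (A + B) / 2" using A0 B0 by simp
  qed
  assume a: "a \<noteq> 1/2" and pq: "p \<noteq> q"
  have "A \<noteq> B"
  proof
    assume "A = B"
    then have "ln A = ln B" by simp
    then have "a * ln p + (1 - a) * ln q = (1 - a) * ln p + a * ln q"
      unfolding A_def B_def using p q by (simp add: ln_mult ln_powr)
    then have "(2 * a - 1) * (ln p - ln q) = 0" by (simp add: algebra_simps)
    then have "ln p = ln q" using a by simp
    then show False using pq p q by simp
  qed
  then have "((A - B) / 2)\<^sup>2 > 0" by simp
  then have "H\<^sup>2 < ((A + B) / 2)\<^sup>2" using sq by linarith
  then show "H < (A + B) / 2"
    by (rule power_less_imp_less_base) (use A0 B0 in simp)
qed

lemma rho_strict:
  assumes s1: "s1 > 0" and s2: "s2 > 0" and ne: "(l1, s1) \<noteq> (l2, s2)"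
    and a: "0 \<le> a" "a \<le> 1" "a \<noteq> 1/2"
  shows "0 < rho (1/2) l1 s1 l2 s2 \<and> rho (1/2) l1 s1 l2 s2 < rho a l1 s1 l2 s2"
proof -
  define P1 where "P1 = cauchy_pdf l1 s1"
  define P2 where "P2 = cauchy_pdf l2 s2"
  define Fa where "Fa = (\<lambda>x. P1 x powr a * P2 x powr (1 - a))"
  define Fb where "Fb = (\<lambda>x. P1 x powr (1 - a) * P2 x powr (1 - (1 - a)))"
  define H where "H = (\<lambda>x. P1 x powr (1/2) * P2 x powr (1 - 1/2))"
  have pos: "P1 x > 0" "P2 x > 0" for x unfolding P1_def P2_def using s1 s2 cauchy_pos by auto
  have iFa: "integrable lborel Fa" unfolding Fa_def P1_def P2_def by (rule rho_integrable[OF s1 s2 a(1,2)])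
  have iFb: "integrable lborel Fb" unfolding Fb_def P1_def P2_def by (rule rho_integrable[OF s1 s2]) (use a in auto)
  have iH: "integrable lborel H" unfolding H_def P1_def P2_def by (rule rho_integrable[OF s1 s2]) auto
  have ra: "rho a l1 s1 l2 s2 = (\<integral>x. Fa x \<partial>lborel)" unfolding rho_def Fa_def P1_def P2_def ..
  have rb: "rho (1 - a) l1 s1 l2 s2 = (\<integral>x. Fb x \<partial>lborel)" unfolding rho_def Fb_def P1_def P2_def ..
  have rh: "rho (1/2) l1 s1 l2 s2 = (\<integral>x. H x \<partial>lborel)" unfolding rho_def H_def P1_def P2_def ..
  have sym: "(\<integral>x. Fa x \<partial>lborel) = (\<integral>x. Fb x \<partial>lborel)"
    using rho_sym[OF s1 s2 a(1,2), of l1 l2] ra rb by simp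
  obtain x0 where x0: "P1 x0 \<noteq> P2 x0" using cauchy_differ[OF s1 s2 ne] unfolding P1_def P2_def by blast
  have "open {x. P1 x \<noteq> P2 x}" unfolding P1_def P2_def
    by (rule open_Collect_neq) (use cauchy_cont s1 s2 in auto)
  then obtain e where e: "e > 0" "ball x0 e \<subseteq> {x. P1 x \<noteq> P2 x}"
    using x0 open_contains_ball by blast
  define Z where "Z = (\<lambda>x. (Fa x + Fb x) / 2 - H x)"
  have iZ: "integrable lborel Z" unfolding Z_def using iFa iFb iH by auto
  have "(\<integral>x. Z x \<partial>lborel) > 0"
  proof (rule integral_pos_ball[OF iZ _ e(1)])
    show "0 \<le> Z x" for x unfolding Z_def Fa_def Fb_def H_def
      using amgm_pointwise(1)[OF pos(1)[of x] pos(2)[of x], of a] by simp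
    show "0 < Z x" if "x \<in> ball x0 e" for x
      using that e(2) amgm_pointwise(2)[OF pos(1)[of x] pos(2)[of x], of a] a(3)
      unfolding Z_def Fa_def Fb_def H_def by auto
  qed
  moreover have "(\<integral>x. Z x \<partial>lborel) = (\<integral>x. Fa x \<partial>lborel) - (\<integral>x. H x \<partial>lborel)"
    unfolding Z_def using iFa iFb iH sym by simp
  moreover have "(\<integral>x. H x \<partial>lborel) > 0"
  proof (rule integral_pos_ball[OF iH _ zero_less_one, of 0])
    fix x
    have "H x > 0" unfolding H_def using pos[of x] by (intro mult_pos_pos) auto
    then show "0 \<le> H x" "0 < H x" by auto
  qed
  ultimately show ?thesis using ra rh by simp
qed

theorem propositionA2:
  fixes l1 s1 l2 s2 :: real
  assumes "s1 > 0" and "s2 > 0"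
  shows "(\<forall>\<alpha>\<in>{0..1}. rho \<alpha> l1 s1 l2 s2 = rho (1 - \<alpha>) l1 s1 l2 s2)
     \<and> ((l1, s1) \<noteq> (l2, s2) \<longrightarrow>
          (\<forall>\<alpha>\<in>{0..1}. \<alpha> \<noteq> 1/2 \<longrightarrow> D_B \<alpha> l1 s1 l2 s2 < D_B (1/2) l1 s1 l2 s2)
          \<and> D_C l1 s1 l2 s2 = D_B (1/2) l1 s1 l2 s2)
     \<and> ((l1, s1) = (l2, s2) \<longrightarrow>
          (\<forall>\<alpha>\<in>{0..1}. D_B \<alpha> l1 s1 l2 s2 = 0)
          \<and> (\<forall>\<alpha>\<in>{0..1}. D_B \<alpha> l1 s1 l2 s2 = D_C l1 s1 l2 s2))"
proof (intro conjI impI)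
  show "\<forall>\<alpha>\<in>{0..1}. rho \<alpha> l1 s1 l2 s2 = rho (1 - \<alpha>) l1 s1 l2 s2"
  proof
    fix a :: real assume "a \<in> {0..1}"
    then show "rho a l1 s1 l2 s2 = rho (1 - a) l1 s1 l2 s2" by (intro rho_sym[OF assms]) auto
  qed
next
  assume ne: "(l1, s1) \<noteq> (l2, s2)"
  have lt: "D_B a l1 s1 l2 s2 < D_B (1/2) l1 s1 l2 s2" if a: "a \<in> {0..1}" "a \<noteq> 1/2" for a
  proof -
    have "0 < rho (1/2) l1 s1 l2 s2 \<and> rho (1/2) l1 s1 l2 s2 < rho a l1 s1 l2 s2"
      using rho_strict[OF assms ne, of a] a by auto
    then show ?thesis unfolding D_B_def by (simp add: ln_less_cancel_iff)
  qed
  then show "\<forall>\<alpha>\<in>{0..1}. \<alpha> \<noteq> 1/2 \<longrightarrow> D_B \<alpha> l1 s1 l2 s2 < D_B (1/2) l1 s1 l2 s2" by blast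
  show "D_C l1 s1 l2 s2 = D_B (1/2) l1 s1 l2 s2"
    unfolding D_C_def
  proof (rule cSup_eq_maximum)
    show "D_B (1/2) l1 s1 l2 s2 \<in> (\<lambda>a. D_B a l1 s1 l2 s2) ` {0..1}"
      by (rule rev_image_eqI[of "1/2"]) auto
    show "x \<le> D_B (1/2) l1 s1 l2 s2" if "x \<in> (\<lambda>a. D_B a l1 s1 l2 s2) ` {0..1}" for x
    proof -
      from that obtain a where a: "a \<in> {0..1}" "x = D_B a l1 s1 l2 s2" by blast
      show ?thesis
      proof (cases "a = 1/2")
        case True from a(2) show ?thesis unfolding True by simp
      next
        case False then show ?thesis using a lt[of a] by simp
      qed
    qed
  qed
next
  assume eq: "(l1, s1) = (l2, s2)"
  then have e1: "l1 = l2" "s1 = s2" by auto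
  have z: "D_B a l1 s1 l2 s2 = 0" if a: "a \<in> {0..1}" for a
  proof -
    have "rho a l1 s1 l2 s2 = (\<integral>x. cauchy_pdf l1 s1 x \<partial>lborel)"
      unfolding rho_def e1
    proof (rule Bochner_Integration.integral_cong[OF refl])
      fix x
      have "cauchy_pdf l2 s2 x > 0" using assms cauchy_pos by auto
      then show "cauchy_pdf l2 s2 x powr a * cauchy_pdf l2 s2 x powr (1 - a) = cauchy_pdf l2 s2 x"
        by (simp add: powr_add[symmetric])
    qed
    then have "rho a l1 s1 l2 s2 = 1" using cauchy_integral assms by simp
    then show ?thesis unfolding D_B_def by simp
  qed
  then show "\<forall>\<alpha>\<in>{0..1}. D_B \<alpha> l1 s1 l2 s2 = 0" by blast
  have "D_C l1 s1 l2 s2 = 0"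
    unfolding D_C_def
  proof (rule cSup_eq_maximum)
    show "0 \<in> (\<lambda>a. D_B a l1 s1 l2 s2) ` {0..1}"
      by (rule rev_image_eqI[of 0]) (use z[of 0] in auto)
    show "x \<le> 0" if "x \<in> (\<lambda>a. D_B a l1 s1 l2 s2) ` {0..1}" for x
    proof -
      from that obtain a where a: "a \<in> {0..1}" "x = D_B a l1 s1 l2 s2" by blast
      then show ?thesis using z[of a] by simp
    qed
  qed
  then show "\<forall>\<alpha>\<in>{0..1}. D_B \<alpha> l1 s1 l2 s2 = D_C l1 s1 l2 s2" using z by simp
qed

end
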